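(* Consider two instances of the baseline diffusion model that differ only in the new product. In the first, $v_{Hi}=v_H$ for all $i$ and the similarity is $s_p$; in the second, $v'_{Hi}=v'_H$ for all $i$ and the similarity is $s'_p$. Assume $(v'_H-v_H)(s'_p-s_p)<0$ and $\underline H_2<\underline H'_2$, where $\underline H_2$ and $\underline H'_2$ are defined in the context. Let $D_n^t$ and $D_n'^t$ be the corresponding sets of new-product consumers. Then: 1. If $s_p>s'_p$, then $D_n'^t\subseteq D_n^t$ for all $t\ge2$. 2. If $s_p<s'_p$, then one of the following holds: (a) $D_n'^t\subseteq D_n^t$ for all $t\ge2$; (b) there exists $\tilde t\ge2$ such that $D_n'^t\subseteq D_n^t$ for all $2\le t\le\tilde t$, and $D_n^t\subseteq D_n'^t$ for all $t>\tilde t$.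
   Context: Baseline diffusion model. There are $N\ge 2$ individuals partitioned into $G\ge 2$ nonempty groups $N_1,\dots,N_G$ (also denoting cardinalities). Members of $N_k$ have aspiration level $H_{N_k}$, with $H_{N_1}>\cdots>H_{N_G}$; write $H_i$ for individual $i$'s level. The incumbent product $p_c$ gives every individual the payoff $v_L$, where $H_{N_2}<v_L<H_{N_1}$. The new product $p_n$ gives individual $i$ the payoff $v_{Hi}\ge H_{N_1}$. Product similarities are $s_{p_c,p_c}=s_{p_n,p_n}=1$, $s_{p_n,p_c}=s_p\in(0,1)$ and $s_{p_c,p_n}=0$. Individual similarities are $s_{i,i}=1$ and $s_{i,j}=s\in(0,1]$ for $i\neq j$. Dynamics. In period $0$ everyone consumes $p_c$ ($D_c^0=\{1,\dots,N\}$, $D_n^0=\emptyset$). For $t\ge1$, $U_i^t(p_c)=\sum_{t'=0}^{t-1}\sum_{j\in D_c^{t'}}s_{i,j}(v_L-H_i)$ and $U_i^t(p_n)=s_pU_i^t(p_c)+\sum_{t'=0}^{t-1}\sum_{j\in D_n^{t'}}s_{i,j}(v_{Hj}-H_i)$. Individual $i\in D_n^t$ iff $U_i^t(p_n)>U_i^t(p_c)$; otherwise $i\in D_c^t$. Period-2 thresholds. Let $\lambda_1=\frac{s(2N-N_1-2)+2}{sN_1}$ (this is the same in both instances). Define $\mathscr F(H)=\frac{v_H-H}{(1-s_p)(v_L-H)}$ for $H<v_L$; it is strictly increasing, with range $(\frac{1}{1-s_p},\infty)$. Let $\underline H_2$ be the unique $H<v_L$ with $\mathscr F(H)=\lambda_1$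 if $\lambda_1>\frac1{1-s_p}$, and $\underline H_2=-\infty$ otherwise. Define $\underline H'_2$ analogously with $v'_H,s'_p$ in place of $v_H,s_p$. (With these definitions, $D_n^2=\{i:H_i>\underline H_2\}$ and $D_n'^2=\{i:H_i>\underline H'_2\}$.) *)

theory Defs
  imports Complex_Main "HOL-Library.Extended_Real"
begin

text \<open>Baseline diffusion model. Individuals form a finite set I. A history is the list
  [D_n^0, ..., D_n^(t-1)] of sets of new-product consumers; D_c^(t') = I - D_n^(t').\<close>

definition simI :: "real \<Rightarrow> 'a \<Rightarrow> 'a \<Rightarrow> real" where
  "simI s i j = (if i = j then 1 else s)"

definition Uold :: "'a set \<Rightarrow> real \<Rightarrow> ('a \<Rightarrow> real) \<Rightarrow> real \<Rightarrow> 'a set list \<Rightarrow> 'a \<Rightarrow> real" where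
  "Uold I s H vL hs i = (\<Sum>t'<length hs. \<Sum>j\<in>I - hs ! t'. simI s i j * (vL - H i))"

definition Unew :: "'a set \<Rightarrow> real \<Rightarrow> real \<Rightarrow> ('a \<Rightarrow> real) \<Rightarrow> real \<Rightarrow> ('a \<Rightarrow> real)
    \<Rightarrow> 'a set list \<Rightarrow> 'a \<Rightarrow> real" where
  "Unew I s sp H vL vH hs i = sp * Uold I s H vL hs i
     + (\<Sum>t'<length hs. \<Sum>j\<in>hs ! t'. simI s i j * (vH j - H i))"

primrec hist :: "'a set \<Rightarrow> real \<Rightarrow> real \<Rightarrow> ('a \<Rightarrow> real) \<Rightarrow> real \<Rightarrow> ('a \<Rightarrow> real)
    \<Rightarrow> nat \<Rightarrow> 'a set list" where
  "hist I s sp H vL vH 0 = [{}]"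
| "hist I s sp H vL vH (Suc t) = hist I s sp H vL vH t @
     [{i \<in> I. Unew I s sp H vL vH (hist I s sp H vL vH t) i > Uold I s H vL (hist I s sp H vL vH t) i}]"

definition Dn :: "'a set \<Rightarrow> real \<Rightarrow> real \<Rightarrow> ('a \<Rightarrow> real) \<Rightarrow> real \<Rightarrow> ('a \<Rightarrow> real)
    \<Rightarrow> nat \<Rightarrow> 'a set" where
  "Dn I s sp H vL vH t = hist I s sp H vL vH t ! t"

definition lambda1 :: "real \<Rightarrow> nat \<Rightarrow> nat \<Rightarrow> real" where
  "lambda1 s N N1 = (s * (2 * real N - real N1 - 2) + 2) / (s * real N1)"

definition FF :: "real \<Rightarrow> real \<Rightarrow> real \<Rightarrow> real \<Rightarrow> real" where
  "FF vH vL sp h = (vH - h) / ((1 - sp) * (vL - h))"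

definition lowH2 :: "real \<Rightarrow> real \<Rightarrow> real \<Rightarrow> real \<Rightarrow> ereal" where
  "lowH2 lam vH vL sp =
     (if lam > 1 / (1 - sp) then ereal (THE h. h < vL \<and> FF vH vL sp h = lam) else -\<infinity>)"

end

theory Submission
  imports Defs
begin

definition wsum :: "real \<Rightarrow> 'a \<Rightarrow> 'a set \<Rightarrow> real" where
  "wsum s i A = (\<Sum>j\<in>A. simI s i j)"

definition sig where
  "sig I s sp H vL vH i n = (\<Sum>t'<n. wsum s i (Dn I s sp H vL vH t'))"

lemma hist_len: "length (hist I s sp H vL vH t) = Suc t"
  by (induction t) auto

lemma hist_nth_Suc: "t' \<le> t \<Longrightarrow> hist I s sp H vL vH (Suc t) ! t' = hist I s sp H vL vH t ! t'"
  by (simp add: nth_append hist_len)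

lemma hist_nth: "t' \<le> t \<Longrightarrow> hist I s sp H vL vH t ! t' = Dn I s sp H vL vH t'"
proof (induction t)
  case 0 then show ?case by (simp add: Dn_def)
next
  case (Suc t)
  show ?case
  proof (cases "t' = Suc t")
    case True then show ?thesis by (simp add: Dn_def)
  next
    case False
    then have "t' \<le> t" using Suc.prems by simp
    then show ?thesis using Suc.IH hist_nth_Suc by metis
  qed
qed

lemma Dn_Suc: "Dn I s sp H vL vH (Suc t) = {i\<in>I. Unew I s sp H vL vH (hist I s sp H vL vH t) i
      > Uold I s H vL (hist I s sp H vL vH t) i}"
  by (simp add: Dn_def nth_append hist_len)

lemma Dn_0: "Dn I s sp H vL vH 0 = {}"
  by (simp add: Dn_def)

lemma Dn_sub: "Dn I s sp H vL vH t \<subseteq> I"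
  by (cases t) (auto simp: Dn_Suc Dn_0)

lemma Uold_eq:
  assumes "finite I"
  shows "Uold I s H vL (hist I s sp H vL vH t) i
     = (vL - H i) * (real (Suc t) * wsum s i I - sig I s sp H vL vH i (Suc t))"
proof -
  have "\<And>t'. t' < Suc t \<Longrightarrow> (\<Sum>j\<in>I - hist I s sp H vL vH t ! t'. simI s i j * (vL - H i))
     = (vL - H i) * (wsum s i I - wsum s i (Dn I s sp H vL vH t'))"
  proof -
    fix t' assume "t' < Suc t"
    then have e: "hist I s sp H vL vH t ! t' = Dn I s sp H vL vH t'" by (simp add: hist_nth)
    have "(\<Sum>j\<in>I - Dn I s sp H vL vH t'. simI s i j) = wsum s i I - wsum s i (Dn I s sp H vL vH t')"
      unfolding wsum_def by (rule sum_diff[OF assms Dn_sub])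
    then show "(\<Sum>j\<in>I - hist I s sp H vL vH t ! t'. simI s i j * (vL - H i))
     = (vL - H i) * (wsum s i I - wsum s i (Dn I s sp H vL vH t'))"
      by (simp add: e sum_distrib_right[symmetric] mult.commute)
  qed
  then have "Uold I s H vL (hist I s sp H vL vH t) i
     = (\<Sum>t'<Suc t. (vL - H i) * (wsum s i I - wsum s i (Dn I s sp H vL vH t')))"
    unfolding Uold_def hist_len by (intro sum.cong) auto
  also have "\<dots> = (vL - H i) * (real (Suc t) * wsum s i I - sig I s sp H vL vH i (Suc t))"
    by (simp add: sig_def sum_distrib_left[symmetric] sum_subtractf)
  finally show ?thesis .
qed

lemma Unew_diff:
  assumes "finite I"
  shows "Unew I s sp H vL (\<lambda>_. vH) (hist I s sp H vL (\<lambda>_. vH) t) i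
       - Uold I s H vL (hist I s sp H vL (\<lambda>_. vH) t) i
     = (vH - H i) * sig I s sp H vL (\<lambda>_. vH) i (Suc t)
       - (1 - sp) * (vL - H i) * (real (Suc t) * wsum s i I - sig I s sp H vL (\<lambda>_. vH) i (Suc t))"
proof -
  have "\<And>t'. t' < Suc t \<Longrightarrow> (\<Sum>j\<in>hist I s sp H vL (\<lambda>_. vH) t ! t'. simI s i j * (vH - H i))
     = (vH - H i) * wsum s i (Dn I s sp H vL (\<lambda>_. vH) t')"
    by (simp add: hist_nth wsum_def sum_distrib_right[symmetric] mult.commute)
  then have "(\<Sum>t'<length (hist I s sp H vL (\<lambda>_. vH) t). \<Sum>j\<in>hist I s sp H vL (\<lambda>_. vH) t ! t'. simI s i j * (vH - H i))
      = (vH - H i) * sig I s sp H vL (\<lambda>_. vH) i (Suc t)"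
    unfolding hist_len sig_def sum_distrib_left by (intro sum.cong) auto
  then show ?thesis
    unfolding Unew_def Uold_eq[OF assms] by (simp add: algebra_simps)
qed

lemma wsum_notin: "finite A \<Longrightarrow> i \<notin> A \<Longrightarrow> wsum s i A = s * real (card A)"
  unfolding wsum_def simI_def by (subst sum.cong[where B=A and h="\<lambda>_. s"]) auto

lemma wsum_in: "finite A \<Longrightarrow> i \<in> A \<Longrightarrow> wsum s i A = 1 + s * (real (card A) - 1)"
proof -
  assume f: "finite A" and i: "i \<in> A"
  have "wsum s i A = simI s i i + wsum s i (A - {i})"
    unfolding wsum_def using f i by (simp add: sum.remove)
  moreover have "card A \<ge> 1" using f i card_0_eq by fastforce
  ultimately show ?thesis
    using f i by (simp add: wsum_notin simI_def of_nat_diff)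
qed

lemma wsum_nonneg: "0 \<le> s \<Longrightarrow> 0 \<le> wsum s i A"
  unfolding wsum_def simI_def by (intro sum_nonneg) auto

lemma wsum_mono: "finite B \<Longrightarrow> A \<subseteq> B \<Longrightarrow> 0 \<le> s \<Longrightarrow> wsum s i A \<le> wsum s i B"
  unfolding wsum_def simI_def by (intro sum_mono2) auto

lemma wsum_I_pos: "finite I \<Longrightarrow> i \<in> I \<Longrightarrow> 0 \<le> s \<Longrightarrow> 1 \<le> wsum s i I"
proof -
  assume a: "finite I" "i \<in> I" "0 \<le> s"
  then have "card I \<ge> 1" by (metis card_0_eq empty_iff less_one not_le)
  then show ?thesis using a by (simp add: wsum_in)
qed

lemma sig_Suc: "sig I s sp H vL vH i (Suc n) = sig I s sp H vL vH i n + wsum s i (Dn I s sp H vL vH n)"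
  by (simp add: sig_def)

lemma sig_nonneg: "0 \<le> s \<Longrightarrow> 0 \<le> sig I s sp H vL vH i n"
  unfolding sig_def by (intro sum_nonneg wsum_nonneg)

lemma sig_lt:
  assumes "finite I" "0 \<le> s" "i \<in> I"
  shows "sig I s sp H vL vH i (Suc t) < real (Suc t) * wsum s i I"
proof -
  have "sig I s sp H vL vH i (Suc t) = wsum s i (Dn I s sp H vL vH 0) + (\<Sum>t'<t. wsum s i (Dn I s sp H vL vH (Suc t')))"
    unfolding sig_def by (rule sum.lessThan_Suc_shift)
  also have "\<dots> \<le> 0 + (\<Sum>t'<t. wsum s i I)"
    using assms Dn_sub by (intro add_mono sum_mono wsum_mono) (auto simp: Dn_0 wsum_def intro: subsetD[OF Dn_sub])
  also have "\<dots> < real (Suc t) * wsum s i I"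
    using wsum_I_pos[OF assms(1,3,2)] by (simp add: algebra_simps)
  finally show ?thesis .
qed

lemma mem_Suc_iff:
  assumes "finite I"
  shows "i \<in> Dn I s sp H vL (\<lambda>_. vH) (Suc t) \<longleftrightarrow> i \<in> I \<and>
     0 < (vH - H i) * sig I s sp H vL (\<lambda>_. vH) i (Suc t)
       - (1 - sp) * (vL - H i) * (real (Suc t) * wsum s i I - sig I s sp H vL (\<lambda>_. vH) i (Suc t))"
  using Unew_diff[OF assms, of s sp H vL vH t i] unfolding Dn_Suc by auto

lemma group1:
  assumes "finite I" "0 \<le> s" "sp < 1" "i \<in> I" "vL < H i" "H i \<le> vH"
  shows "i \<in> Dn I s sp H vL (\<lambda>_. vH) (Suc t)"
proof -
  let ?g = "sig I s sp H vL (\<lambda>_. vH) i (Suc t)"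
  have a: "0 \<le> (vH - H i) * ?g" by (intro mult_nonneg_nonneg sig_nonneg) (use assms in auto)
  have b: "0 < real (Suc t) * wsum s i I - ?g" using sig_lt[OF assms(1,2,4)] by simp
  have "0 < (1 - sp) * (H i - vL)" using assms by simp
  then have "0 < (1 - sp) * (H i - vL) * (real (Suc t) * wsum s i I - ?g)" using b by simp
  then show ?thesis using a assms(4) by (simp add: mem_Suc_iff[OF assms(1)] algebra_simps)
qed

lemma FF_alt: "h < vL \<Longrightarrow> sp < 1 \<Longrightarrow> FF vH vL sp h = (1 + (vH - vL) / (vL - h)) / (1 - sp)"
  unfolding FF_def by (simp add: field_simps)

lemma FF_pos: "h < vL \<Longrightarrow> sp < 1 \<Longrightarrow> vL < vH \<Longrightarrow> 0 < FF vH vL sp h"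
  unfolding FF_def by simp

lemma FF_mono: "x \<le> y \<Longrightarrow> y < vL \<Longrightarrow> sp < 1 \<Longrightarrow> vL < vH \<Longrightarrow> FF vH vL sp x \<le> FF vH vL sp y"
  apply (subst FF_alt[of x], simp, simp)
  apply (subst FF_alt[of y], simp, simp)
  by (intro divide_right_mono add_left_mono divide_left_mono) auto

lemma FF_strict: "x < y \<Longrightarrow> y < vL \<Longrightarrow> sp < 1 \<Longrightarrow> vL < vH \<Longrightarrow> FF vH vL sp x < FF vH vL sp y"
  apply (subst FF_alt[of x], simp, simp)
  apply (subst FF_alt[of y], simp, simp)
  by (intro divide_strict_right_mono add_strict_left_mono divide_strict_left_mono) auto

lemma pos_mult_iff: "0 < (b::real) \<Longrightarrow> (0 < b * x) = (0 < x)"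
  by (simp add: zero_less_mult_iff)

lemma low_iff:
  assumes "finite I" "sp < 1" "i \<in> I" "H i < vL"
  shows "i \<in> Dn I s sp H vL (\<lambda>_. vH) (Suc t) \<longleftrightarrow>
     real (Suc t) * wsum s i I < (FF vH vL sp (H i) + 1) * sig I s sp H vL (\<lambda>_. vH) i (Suc t)"
proof -
  let ?g = "sig I s sp H vL (\<lambda>_. vH) i (Suc t)" and ?b = "(1 - sp) * (vL - H i)"
  have b: "0 < ?b" using assms by simp
  have n1: "1 - sp \<noteq> 0" "vL - H i \<noteq> 0" using assms by auto
  have e: "?b * FF vH vL sp (H i) = vH - H i" unfolding FF_def using n1 by simp
  have "?b * ((FF vH vL sp (H i) + 1) * ?g - real (Suc t) * wsum s i I)
      = (?b * FF vH vL sp (H i)) * ?g + ?b * ?g - ?b * (real (Suc t) * wsum s i I)"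
    by (simp add: algebra_simps)
  also have "\<dots> = (vH - H i) * ?g - ?b * (real (Suc t) * wsum s i I - ?g)"
    unfolding e by (simp add: algebra_simps)
  finally have "(vH - H i) * ?g - ?b * (real (Suc t) * wsum s i I - ?g)
      = ?b * ((FF vH vL sp (H i) + 1) * ?g - real (Suc t) * wsum s i I)" by simp
  then have "i \<in> Dn I s sp H vL (\<lambda>_. vH) (Suc t) \<longleftrightarrow>
     0 < ?b * ((FF vH vL sp (H i) + 1) * ?g - real (Suc t) * wsum s i I)"
    unfolding mem_Suc_iff[OF assms(1)] using assms(3) by simp
  also have "\<dots> \<longleftrightarrow> 0 < (FF vH vL sp (H i) + 1) * ?g - real (Suc t) * wsum s i I"
    by (rule pos_mult_iff[OF b])
  finally show ?thesis by simp
qed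


lemma mono_step:
  assumes fin: "finite I" and s0: "0 \<le> s" and sp1: "sp < 1" and vLH: "vL < vH"
    and Hc: "\<forall>i\<in>I. H i \<noteq> vL \<and> H i \<le> vH"
  shows "Dn I s sp H vL (\<lambda>_. vH) t \<subseteq> Dn I s sp H vL (\<lambda>_. vH) (Suc t)"
proof (induction t rule: less_induct)
  case (less t)
  let ?D = "Dn I s sp H vL (\<lambda>_. vH)"
  show ?case
  proof (cases t)
    case 0 then show ?thesis by (simp add: Dn_0)
  next
    case (Suc m)
    have chain: "?D k \<subseteq> ?D t" if "k \<le> t" for k
      using that
    proof (induction rule: dec_induct)
      case base then show ?case by simp
    next
      case (step n) then show ?case using less.IH[of n] by (meson order_trans)
    qed
    show ?thesis
    proof
      fix i assume i: "i \<in> ?D t"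
      then have iI: "i \<in> I" using Dn_sub[of I s sp H vL "\<lambda>_. vH" t] by blast
      show "i \<in> ?D (Suc t)"
      proof (cases "vL < H i")
        case True then show ?thesis using Hc iI by (intro group1[where H=H and vL=vL and vH=vH and i=i, OF fin s0 sp1 iI True]) auto
      next
        case False
        then have hl: "H i < vL" using Hc iI by force
        let ?F = "FF vH vL sp (H i) + 1" and ?W = "wsum s i I"
          and ?g = "sig I s sp H vL (\<lambda>_. vH) i" and ?w = "wsum s i (?D t)"
        have Fp: "0 < ?F" using FF_pos[OF hl sp1 vLH] by simp
        have A: "real t * ?W < ?F * ?g t"
          using i low_iff[where H=H and s=s and vH=vH and t=m, OF fin sp1 iI hl] Suc by simp
        have "?g t \<le> (\<Sum>t'<t. ?w)"
          unfolding sig_def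
        proof (intro sum_mono)
          fix t' assume "t' \<in> {..<t}"
          then show "wsum s i (?D t') \<le> ?w"
            by (intro wsum_mono[OF finite_subset[OF Dn_sub fin] chain s0]) simp
        qed
        then have "?g t \<le> real t * ?w" by simp
        then have "?F * ?g t \<le> ?F * (real t * ?w)" using Fp by simp
        with A have "real t * ?W < real t * (?F * ?w)" by (simp add: algebra_simps)
        then have B: "?W < ?F * ?w" using Suc by (simp add: mult_less_cancel_left)
        have "real (Suc t) * ?W < ?F * ?g t + ?F * ?w" using A B by (simp add: algebra_simps)
        also have "\<dots> = ?F * ?g (Suc t)" by (simp add: sig_Suc algebra_simps)
        finally show ?thesis using low_iff[where H=H and s=s and vH=vH and t=t, OF fin sp1 iI hl] by simp
      qed
    qed
  qed
qed

lemma mono_le: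
  assumes "finite I" "0 \<le> s" "sp < 1" "vL < vH" "\<forall>i\<in>I. H i \<noteq> vL \<and> H i \<le> vH"
    and "k \<le> t"
  shows "Dn I s sp H vL (\<lambda>_. vH) k \<subseteq> Dn I s sp H vL (\<lambda>_. vH) t"
  using assms(6)
proof (induction rule: dec_induct)
  case base then show ?case by simp
next
  case (step n) then show ?case using mono_step[OF assms(1-5), of n] by blast
qed

lemma wsum_le_upper:
  assumes "finite A" "i \<in> A \<longrightarrow> j \<in> A" "s \<le> 1"
  shows "wsum s i A \<le> wsum s j A"
  using assms by (cases "i \<in> A"; cases "j \<in> A") (auto simp: wsum_in wsum_notin algebra_simps)

lemma upper:
  assumes fin: "finite I" and s0: "0 \<le> s" and s1: "s \<le> 1" and sp1: "sp < 1" and vLH: "vL < vH"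
    and Hc: "\<forall>i\<in>I. H i \<noteq> vL \<and> H i \<le> vH"
  shows "\<forall>i j. i \<in> Dn I s sp H vL (\<lambda>_. vH) t \<longrightarrow> j \<in> I \<longrightarrow> H i \<le> H j
     \<longrightarrow> j \<in> Dn I s sp H vL (\<lambda>_. vH) t"
proof (induction t rule: less_induct)
  case (less t)
  let ?D = "Dn I s sp H vL (\<lambda>_. vH)"
  show ?case
  proof (cases t)
    case 0 then show ?thesis by (simp add: Dn_0)
  next
    case (Suc m)
    show ?thesis
    proof (intro allI impI)
      fix i j assume i: "i \<in> ?D t" and jI: "j \<in> I" and hij: "H i \<le> H j"
      then have iI: "i \<in> I" using Dn_sub[of I s sp H vL "\<lambda>_. vH" t] by blast
      show "j \<in> ?D t"
      proof (cases "vL < H j")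
        case True then show ?thesis using Hc jI Suc by (intro group1[where H=H and i=j and vH=vH and t=m, OF fin s0 sp1 jI True, simplified Suc[symmetric]]) auto
      next
        case False
        then have hj: "H j < vL" using Hc jI by force
        then have hi: "H i < vL" using hij by simp
        have WW: "wsum s i I = wsum s j I" using fin iI jI by (simp add: wsum_in)
        have gg: "sig I s sp H vL (\<lambda>_. vH) i t \<le> sig I s sp H vL (\<lambda>_. vH) j t"
          unfolding sig_def
        proof (intro sum_mono wsum_le_upper)
          fix k assume "k \<in> {..<t}"
          then show "i \<in> ?D k \<longrightarrow> j \<in> ?D k" using less.IH[of k] jI hij by simp
        qed (use finite_subset[OF Dn_sub fin] s1 in auto)
        have FF: "FF vH vL sp (H i) \<le> FF vH vL sp (H j)" by (rule FF_mono[OF hij hj sp1 vLH])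
        have Fp: "0 < FF vH vL sp (H i) + 1" using FF_pos[OF hi sp1 vLH] by simp
        have A: "real t * wsum s i I < (FF vH vL sp (H i) + 1) * sig I s sp H vL (\<lambda>_. vH) i t"
          using i low_iff[where H=H and s=s and vH=vH and t=m, OF fin sp1 iI hi] Suc by simp
        also have "\<dots> \<le> (FF vH vL sp (H i) + 1) * sig I s sp H vL (\<lambda>_. vH) j t"
          using gg Fp by simp
        also have "\<dots> \<le> (FF vH vL sp (H j) + 1) * sig I s sp H vL (\<lambda>_. vH) j t"
          using FF sig_nonneg[OF s0] by (intro mult_right_mono) auto
        finally show ?thesis using low_iff[where H=H and s=s and vH=vH and t=m, OF fin sp1 jI hj] Suc WW by simp
      qed
    qed
  qed
qed


lemma FF_gt_c:
  assumes "h < vL" "sp < 1" "vL < vH"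
  shows "1 / (1 - sp) < FF vH vL sp h"
proof -
  have "1 < 1 + (vH - vL) / (vL - h)" using assms by simp
  then show ?thesis using assms by (simp add: FF_alt divide_strict_right_mono)
qed

lemma FF_less_iff:
  assumes "h < vL" "sp < 1" "sp' < 1"
  shows "FF vH' vL sp' h < FF vH vL sp h \<longleftrightarrow> (vH' - h) * (1 - sp) < (vH - h) * (1 - sp')"
proof -
  have p: "0 < 1 - sp" "0 < 1 - sp'" "0 < vL - h" using assms by auto
  show ?thesis unfolding FF_def using p
    by (simp add: divide_simps)
qed

lemma aux_div: "0 < (E::real) \<Longrightarrow> 0 < m \<Longrightarrow> 0 < p \<Longrightarrow> (E * (m + 1) / m) / (p * (E / m)) = (m + 1) / p"
  by (simp add: field_simps)

lemma the_FF:
  assumes "vL < vH" "sp < 1" "1 / (1 - sp) < lam"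
  shows "(THE h. h < vL \<and> FF vH vL sp h = lam) < vL \<and> FF vH vL sp (THE h. h < vL \<and> FF vH vL sp h = lam) = lam"
proof (rule theI')
  define m where "m = (1 - sp) * lam - 1"
  have p: "0 < 1 - sp" using assms by simp
  have m: "0 < m" unfolding m_def using assms p by (simp add: field_simps)
  define h0 where "h0 = vL - (vH - vL) / m"
  have d: "vL - h0 = (vH - vL) / m" unfolding h0_def by simp
  have e: "vH - h0 = (vH - vL) * (m + 1) / m" unfolding h0_def using m by (simp add: field_simps)
  have ep: "0 < vH - vL" using assms by simp
  have "FF vH vL sp h0 = ((vH - vL) * (m + 1) / m) / ((1 - sp) * ((vH - vL) / m))"
    unfolding FF_def d e by simp
  also have "\<dots> = (m + 1) / (1 - sp)" using aux_div[of "vH - vL" m "1 - sp"] m p ep by simp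
  also have "\<dots> = lam" using p unfolding m_def by simp
  finally have "FF vH vL sp h0 = lam" .
  moreover have "0 < (vH - vL) / m" using m ep by simp
  then have "h0 < vL" using d by simp
  ultimately have ex: "h0 < vL \<and> FF vH vL sp h0 = lam" by simp
  show "\<exists>!h. h < vL \<and> FF vH vL sp h = lam"
  proof (rule ex1I[of _ h0])
    show "h0 < vL \<and> FF vH vL sp h0 = lam" by (rule ex)
  next
    fix h assume h: "h < vL \<and> FF vH vL sp h = lam"
    show "h = h0"
    proof (rule ccontr)
      assume "h \<noteq> h0"
      then consider "h < h0" | "h0 < h" by linarith
      then show False
        using FF_strict[of h h0 vL sp vH] FF_strict[of h0 h vL sp vH] h ex assms by cases auto
    qed
  qed
qed

lemma FF_p1:
  assumes "h < vL" "sp < 1"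
  shows "FF vH vL sp h + 1 = (vH - h + (1 - sp) * (vL - h)) / ((1 - sp) * (vL - h))"
proof -
  have nz: "(1 - sp) * (vL - h) \<noteq> 0" using assms by simp
  show ?thesis unfolding FF_def divide_add_eq_iff[OF nz] by simp
qed

lemma ratio:
  assumes hj: "hj \<le> hi" and hi: "hi < vL" and sp: "sp < 1" and sp': "sp' < 1"
    and K: "(vH' - vL) * (2 - sp) \<le> (vH - vL) * (2 - sp')"
  shows "(FF vH vL sp hj + 1) * (FF vH' vL sp' hi + 1) \<le> (FF vH' vL sp' hj + 1) * (FF vH vL sp hi + 1)"
proof -
  have hj': "hj < vL" using hj hi by simp
  have p: "0 < 1 - sp" "0 < 1 - sp'" "0 < vL - hi" "0 < vL - hj" using assms hj' by auto
  define aj where "aj = vL - hj"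
  define ai where "ai = vL - hi"
  have aij: "ai \<le> aj" using hj unfolding ai_def aj_def by simp
  have key: "(vH - hj + (1 - sp) * aj) * (vH' - hi + (1 - sp') * ai)
      \<le> (vH' - hj + (1 - sp') * aj) * (vH - hi + (1 - sp) * ai)"
  proof -
    have "(vH' - hj + (1 - sp') * aj) * (vH - hi + (1 - sp) * ai)
        - (vH - hj + (1 - sp) * aj) * (vH' - hi + (1 - sp') * ai)
        = (aj - ai) * ((vH - vL) * (2 - sp') - (vH' - vL) * (2 - sp))"
      unfolding ai_def aj_def by (simp add: algebra_simps)
    also have "\<dots> \<ge> 0" using aij K by simp
    finally show ?thesis by simp
  qed
  show ?thesis
    unfolding FF_p1[OF hj' sp] FF_p1[OF hj' sp'] FF_p1[OF hi sp] FF_p1[OF hi sp']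
    using p key unfolding ai_def[symmetric] aj_def[symmetric]
    by (simp add: divide_simps)
qed


lemma D1_low:
  assumes "finite I" "0 \<le> s" "sp < 1" "i \<in> I" "H i < vL"
  shows "i \<notin> Dn I s sp H vL (\<lambda>_. vH) 1"
proof -
  have "sig I s sp H vL (\<lambda>_. vH) i (Suc 0) = 0" by (simp add: sig_def Dn_0 wsum_def)
  moreover have "0 \<le> wsum s i I" by (rule wsum_nonneg[OF assms(2)])
  ultimately show ?thesis
    using low_iff[where H=H and s=s and vH=vH and t=0, OF assms(1,3,4,5)] by simp
qed

lemma D1_eq:
  assumes "finite I" "0 \<le> s" "sp < 1" "\<forall>i\<in>I. H i \<noteq> vL \<and> H i \<le> vH"
  shows "Dn I s sp H vL (\<lambda>_. vH) 1 = {i\<in>I. vL < H i}"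
proof (intro set_eqI iffI)
  fix i assume i: "i \<in> Dn I s sp H vL (\<lambda>_. vH) 1"
  then have iI: "i \<in> I" using Dn_sub[of I s sp H vL "\<lambda>_. vH" 1] by blast
  show "i \<in> {i\<in>I. vL < H i}"
  proof (rule ccontr)
    assume "i \<notin> {i\<in>I. vL < H i}"
    then have "H i < vL" using iI assms(4) by force
    then show False using D1_low[OF assms(1-3) iI] i by blast
  qed
next
  fix i assume i: "i \<in> {i\<in>I. vL < H i}"
  then have "i \<in> I" "vL < H i" "H i \<le> vH" using assms(4) by auto
  then have "i \<in> Dn I s sp H vL (\<lambda>_. vH) (Suc 0)"
    by (intro group1[where H=H and i=i and vH=vH and t=0, OF assms(1-3)])
  then show "i \<in> Dn I s sp H vL (\<lambda>_. vH) 1" by simp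
qed

lemma D2_iff:
  assumes fin: "finite I" and s0: "0 < s" and sp1: "sp < 1"
    and Hc: "\<forall>i\<in>I. H i \<noteq> vL \<and> H i \<le> vH"
    and iI: "i \<in> I" and hi: "H i < vL" and N1: "0 < card {i\<in>I. vL < H i}"
  shows "i \<in> Dn I s sp H vL (\<lambda>_. vH) 2 \<longleftrightarrow>
     lambda1 s (card I) (card {i\<in>I. vL < H i}) < FF vH vL sp (H i)"
proof -
  let ?G = "{i\<in>I. vL < H i}" and ?F = "FF vH vL sp (H i)"
  have "sig I s sp H vL (\<lambda>_. vH) i (Suc 1) = wsum s i ?G"
  proof -
    have d1: "Dn I s sp H vL (\<lambda>_. vH) (Suc 0) = ?G"
      using D1_eq[OF fin less_imp_le[OF s0] sp1 Hc] by simp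
    show ?thesis by (simp add: sig_def Dn_0 wsum_def d1)
  qed
  also have "\<dots> = s * real (card ?G)" using fin hi by (intro wsum_notin) auto
  finally have sg: "sig I s sp H vL (\<lambda>_. vH) i (Suc 1) = s * real (card ?G)" .
  have W: "wsum s i I = 1 + s * (real (card I) - 1)" using fin iI by (simp add: wsum_in)
  have "i \<in> Dn I s sp H vL (\<lambda>_. vH) (Suc (Suc 0)) \<longleftrightarrow>
      2 * (1 + s * (real (card I) - 1)) < (?F + 1) * (s * real (card ?G))"
    using low_iff[where H=H and s=s and vH=vH and t=1, OF fin sp1 iI hi] sg W
    by simp
  also have "\<dots> \<longleftrightarrow> (s * (2 * real (card I) - real (card ?G) - 2) + 2) < ?F * (s * real (card ?G))"
  proof -
    have e1: "(?F + 1) * (s * real (card ?G)) = ?F * (s * real (card ?G)) + s * real (card ?G)"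
      by (simp add: algebra_simps)
    have e2: "2 * (1 + s * (real (card I) - 1)) = (s * (2 * real (card I) - real (card ?G) - 2) + 2) + s * real (card ?G)"
      by (simp add: algebra_simps)
    show ?thesis using e1 e2 by linarith
  qed
  also have "\<dots> \<longleftrightarrow> lambda1 s (card I) (card ?G) < ?F"
  proof -
    have c: "0 < s * real (card ?G)" using s0 N1 by simp
    show ?thesis unfolding lambda1_def using pos_divide_less_eq[OF c] by simp
  qed
  finally show ?thesis unfolding numeral_2_eq_2 .
qed

lemma incl:
  assumes fin: "finite I" and s0: "0 \<le> s" and sp1: "sp < 1" and sp1': "sp' < 1"
    and prev: "\<forall>t'<T. Dn I s sp' H vL (\<lambda>_. vH') t' \<subseteq> Dn I s sp H vL (\<lambda>_. vH) t'"
    and iI: "i \<in> I" and hi: "H i < vL" and vLH': "vL < vH'"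
    and FF: "FF vH' vL sp' (H i) \<le> FF vH vL sp (H i)"
    and i: "i \<in> Dn I s sp' H vL (\<lambda>_. vH') T"
  shows "i \<in> Dn I s sp H vL (\<lambda>_. vH) T"
proof (cases T)
  case 0 then show ?thesis using i by (simp add: Dn_0)
next
  case (Suc m)
  let ?g = "sig I s sp H vL (\<lambda>_. vH) i T" and ?g' = "sig I s sp' H vL (\<lambda>_. vH') i T"
  have gg: "?g' \<le> ?g" unfolding sig_def
  proof (intro sum_mono)
    fix t' assume "t' \<in> {..<T}"
    then show "wsum s i (Dn I s sp' H vL (\<lambda>_. vH') t') \<le> wsum s i (Dn I s sp H vL (\<lambda>_. vH) t')"
      using prev by (intro wsum_mono[OF finite_subset[OF Dn_sub fin] _ s0]) auto
  qed
  have Fp: "0 < FF vH' vL sp' (H i) + 1" using FF_pos[OF hi sp1' vLH'] by simp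
  have "real T * wsum s i I < (FF vH' vL sp' (H i) + 1) * ?g'"
    using i low_iff[where H=H and s=s and vH=vH' and t=m, OF fin sp1' iI hi] Suc by simp
  also have "\<dots> \<le> (FF vH' vL sp' (H i) + 1) * ?g" using gg Fp by simp
  also have "\<dots> \<le> (FF vH vL sp (H i) + 1) * ?g"
    using FF sig_nonneg[OF s0] by (intro mult_right_mono) auto
  finally have X: "real (Suc m) * wsum s i I < (FF vH vL sp (H i) + 1) * sig I s sp H vL (\<lambda>_. vH) i (Suc m)"
    unfolding Suc .
  show ?thesis unfolding Suc low_iff[where H=H and s=s and vH=vH and t=m, OF fin sp1 iI hi] by (rule X)
qed


lemma final_alg:
  fixes a a' b b' P P' Q Q' X Y :: real
  assumes a: "0 < a" and b: "0 < b" and hA: "X < a' * P'" and hB: "a * P \<le> X" and PP: "P' \<le> P"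
    and P0: "0 \<le> P'" and r: "b * a' \<le> b' * a" and hj: "Y < b * (P + Q)" and QQ: "Q \<le> Q'" and Q0: "0 \<le> Q"
  shows "Y < b' * (P' + Q')"
proof -
  have 1: "a * P < a' * P'" using hA hB by linarith
  have 2: "a * P' \<le> a * P" using PP a by simp
  have 3: "a * P' < a' * P'" using 1 2 by linarith
  have 4: "a < a'" using 3 P0 by (metis mult_right_less_imp_less)
  have "b * a < b * a'" using 4 b by simp
  then have "a * b < a * b'" using r by (simp add: algebra_simps)
  then have 5: "b < b'" using a by simp
  have "b * (a * P) < b * (a' * P')" using 1 b by simp
  also have "\<dots> = (b * a') * P'" by (simp add: algebra_simps)
  also have "\<dots> \<le> (b' * a) * P'" using r P0 by (intro mult_right_mono)
  finally have "a * (b * P) < a * (b' * P')" by (simp add: algebra_simps)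
  then have 7: "b * P < b' * P'" using a by simp
  have "b * Q \<le> b' * Q" using 5 Q0 by (intro mult_right_mono) auto
  also have "\<dots> \<le> b' * Q'" using 5 b QQ by (intro mult_left_mono) auto
  finally have 8: "b * Q \<le> b' * Q'" .
  have "Y < b * P + b * Q" using hj by (simp add: algebra_simps)
  also have "\<dots> < b' * P' + b' * Q'" using 7 8 by linarith
  finally show ?thesis by (simp add: algebra_simps)
qed

lemma sig_split:
  "T0 \<le> T \<Longrightarrow> sig I s sp H vL vH i T = sig I s sp H vL vH i T0 + (\<Sum>t\<in>{T0..<T}. wsum s i (Dn I s sp H vL vH t))"
  unfolding sig_def lessThan_atLeast0 by (simp add: sum.atLeastLessThan_concat)


theorem proposition3:
  fixes I :: "'a set" and grp :: "'a \<Rightarrow> nat" and G :: nat and HN :: "nat \<Rightarrow> real"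
    and H :: "'a \<Rightarrow> real" and vL vH vH' sp sp' s :: real
  assumes finI: "finite I"
    and G2: "G \<ge> 2"
    and grp_range: "\<forall>i\<in>I. grp i \<in> {1..G}"
    and grp_nonempty: "\<forall>k\<in>{1..G}. \<exists>i\<in>I. grp i = k"
    and HN_decr: "\<forall>k\<in>{1..G}. \<forall>l\<in>{1..G}. k < l \<longrightarrow> HN k > HN l"
    and H_def: "\<forall>i\<in>I. H i = HN (grp i)"
    and vL_bounds: "HN 2 < vL" "vL < HN 1"
    and vH_ge: "vH \<ge> HN 1" and vH'_ge: "vH' \<ge> HN 1"
    and sp: "0 < sp" "sp < 1" and sp': "0 < sp'" "sp' < 1"
    and s: "0 < s" "s \<le> 1"
    and opp: "(vH' - vH) * (sp' - sp) < 0"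
    and thr: "lowH2 (lambda1 s (card I) (card {i\<in>I. grp i = 1})) vH vL sp
              < lowH2 (lambda1 s (card I) (card {i\<in>I. grp i = 1})) vH' vL sp'"
  shows "(sp > sp' \<longrightarrow>
            (\<forall>t\<ge>2. Dn I s sp' H vL (\<lambda>_. vH') t \<subseteq> Dn I s sp H vL (\<lambda>_. vH) t))
       \<and> (sp < sp' \<longrightarrow>
            (\<forall>t\<ge>2. Dn I s sp' H vL (\<lambda>_. vH') t \<subseteq> Dn I s sp H vL (\<lambda>_. vH) t)
          \<or> (\<exists>tt\<ge>2. (\<forall>t. 2 \<le> t \<and> t \<le> tt \<longrightarrow>
                          Dn I s sp' H vL (\<lambda>_. vH') t \<subseteq> Dn I s sp H vL (\<lambda>_. vH) t)
                    \<and> (\<forall>t>tt. Dn I s sp H vL (\<lambda>_. vH) t \<subseteq> Dn I s sp' H vL (\<lambda>_. vH') t)))"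
proof -
  let ?D = "Dn I s sp H vL (\<lambda>_. vH)" and ?D' = "Dn I s sp' H vL (\<lambda>_. vH')"
  let ?G = "{i\<in>I. vL < H i}"
  have s0: "0 \<le> s" using s by simp
  have vLH: "vL < vH" using vL_bounds vH_ge by simp
  have vLH': "vL < vH'" using vL_bounds vH'_ge by simp
  have grp1: "grp i = 1 \<longleftrightarrow> vL < H i" if iI: "i \<in> I" for i
  proof
    assume "grp i = 1" then show "vL < H i" using H_def iI vL_bounds by simp
  next
    assume h: "vL < H i"
    show "grp i = 1"
    proof (rule ccontr)
      assume ne: "grp i \<noteq> 1"
      have k: "grp i \<in> {1..G}" using grp_range iI by blast
      then have "2 \<le> grp i" using ne by simp
      then have "HN (grp i) \<le> HN 2"
        using HN_decr k G2 by (cases "grp i = 2") (auto simp: less_le)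
      then show False using h H_def iI vL_bounds by simp
    qed
  qed
  have Hle: "H i \<le> HN 1" if iI: "i \<in> I" for i
  proof -
    have k: "grp i \<in> {1..G}" using grp_range iI by blast
    then have "HN (grp i) \<le> HN 1"
      using HN_decr G2 by (cases "grp i = 1") (auto simp: less_le)
    then show ?thesis using H_def iI by simp
  qed
  have Hc: "\<forall>i\<in>I. H i \<noteq> vL \<and> H i \<le> vH"
  proof
    fix i assume iI: "i \<in> I"
    have "H i \<noteq> vL"
    proof
      assume e: "H i = vL"
      have k: "grp i \<in> {1..G}" using grp_range iI by blast
      show False
      proof (cases "grp i = 1")
        case True then show False using e H_def iI vL_bounds by simp
      next
        case False
        then have "2 \<le> grp i" using k by simp
        then have "HN (grp i) \<le> HN 2"
          using HN_decr k G2 by (cases "grp i = 2") (auto simp: less_le)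
        then show False using e H_def iI vL_bounds by simp
      qed
    qed
    then show "H i \<noteq> vL \<and> H i \<le> vH" using Hle[OF iI] vH_ge by simp
  qed
  have Hc': "\<forall>i\<in>I. H i \<noteq> vL \<and> H i \<le> vH'" using Hc Hle vH'_ge by force
  have Glow: "H i < vL" if "i \<in> I" "\<not> vL < H i" for i using that Hc by force
  have Geq: "{i\<in>I. grp i = 1} = ?G" using grp1 by blast
  have N1: "0 < card ?G"
  proof -
    obtain i where "i \<in> I" "grp i = 1" using grp_nonempty G2 by force
    then have "i \<in> ?G" using grp1 by blast
    then show ?thesis using finI by (metis (no_types, lifting) card_gt_0_iff empty_iff finite_subset mem_Collect_eq subsetI)
  qed
  define lam where "lam = lambda1 s (card I) (card ?G)"
  have thr': "lowH2 lam vH vL sp < lowH2 lam vH' vL sp'" using thr unfolding lam_def Geq .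
  have D2: "i \<in> ?D 2 \<longleftrightarrow> lam < FF vH vL sp (H i)" if "i \<in> I" "H i < vL" for i
    unfolding lam_def by (rule D2_iff[OF finI s(1) sp(2) Hc that N1])
  have D2': "i \<in> ?D' 2 \<longleftrightarrow> lam < FF vH' vL sp' (H i)" if "i \<in> I" "H i < vL" for i
    unfolding lam_def by (rule D2_iff[OF finI s(1) sp'(2) Hc' that N1])
  have lam': "1 / (1 - sp') < lam"
  proof (rule ccontr)
    assume "\<not> 1 / (1 - sp') < lam"
    then have "lowH2 lam vH' vL sp' = -\<infinity>" unfolding lowH2_def by simp
    then show False using thr' by simp
  qed
  define h2' where "h2' = (THE h. h < vL \<and> FF vH' vL sp' h = lam)"
  have h2': "h2' < vL" "FF vH' vL sp' h2' = lam"
    using the_FF[OF vLH' sp'(2) lam'] unfolding h2'_def by auto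
  define h2 where "h2 = (THE h. h < vL \<and> FF vH vL sp h = lam)"
  have fin2: "h2 < vL \<and> FF vH vL sp h2 = lam \<and> h2 < h2'" if "1 / (1 - sp) < lam"
  proof -
    have "h2 < vL" "FF vH vL sp h2 = lam"
      using the_FF[OF vLH sp(2) that] unfolding h2_def by auto
    moreover have "ereal h2 < ereal h2'" using thr' that lam' unfolding lowH2_def h2_def h2'_def by simp
    ultimately show ?thesis by simp
  qed
  have P01: "?D' t \<subseteq> ?D t" if "t \<le> 1" for t
  proof (cases t)
    case 0 then show ?thesis by (simp add: Dn_0)
  next
    case (Suc m) then have "t = 1" using that by simp
    then show ?thesis using D1_eq[OF finI s0 sp(2) Hc] D1_eq[OF finI s0 sp'(2) Hc'] by simp
  qed
  have P2: "?D' 2 \<subseteq> ?D 2"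
  proof
    fix i assume i: "i \<in> ?D' 2"
    then have iI: "i \<in> I" using Dn_sub[of I s sp' H vL "\<lambda>_. vH'" 2] by blast
    show "i \<in> ?D 2"
    proof (cases "vL < H i")
      case True
      then have "i \<in> ?D (Suc 1)"
        using Hc iI by (intro group1[where H=H and i=i and vH=vH and t=1, OF finI s0 sp(2) iI True]) auto
      then show ?thesis by (simp add: numeral_2_eq_2)
    next
      case False
      then have hi: "H i < vL" using Glow iI by blast
      have F': "lam < FF vH' vL sp' (H i)" using D2'[OF iI hi] i by simp
      have "h2' < H i"
      proof (rule ccontr)
        assume "\<not> h2' < H i"
        then have "FF vH' vL sp' (H i) \<le> FF vH' vL sp' h2'"
          using FF_mono[of "H i" h2' vL sp' vH'] h2' sp' vLH' by simp
        then show False using F' h2' by simp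
      qed
      have "lam < FF vH vL sp (H i)"
      proof (cases "1 / (1 - sp) < lam")
        case True
        then have "FF vH vL sp h2 < FF vH vL sp (H i)"
          using fin2 \<open>h2' < H i\<close> hi sp vLH by (intro FF_strict) auto
        then show ?thesis using fin2[OF True] by simp
      next
        case False
        then show ?thesis using FF_gt_c[OF hi sp(2) vLH] by simp
      qed
      then show ?thesis using D2[OF iI hi] by simp
    qed
  qed
  have part1: "\<forall>t\<ge>2. ?D' t \<subseteq> ?D t" if spgt: "sp' < sp"
  proof -
    have "?D' T \<subseteq> ?D T" for T
    proof (induction T rule: less_induct)
      case (less T)
      show ?case
      proof (cases "T \<le> 2")
        case True
        then consider "T \<le> 1" | "T = 2" by linarith
        then show ?thesis using P01 P2 by cases auto
      next
        case False
        show ?thesis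
        proof
          fix i assume i: "i \<in> ?D' T"
          then have iI: "i \<in> I" using Dn_sub[of I s sp' H vL "\<lambda>_. vH'" T] by blast
          show "i \<in> ?D T"
          proof (cases "vL < H i")
            case True
            have "i \<in> ?D (Suc (T - 1))"
              using Hc iI by (intro group1[where H=H and i=i and vH=vH and t="T - 1", OF finI s0 sp(2) iI True]) auto
            then show ?thesis using False by simp
          next
            case nl: False
            then have hi: "H i < vL" using Glow iI by blast
            show ?thesis
            proof (cases "i \<in> ?D 2")
              case True
              then show ?thesis using mono_le[OF finI s0 sp(2) vLH Hc, of 2 T] False by auto
            next
              case notin: False
              then have Fle: "\<not> lam < FF vH vL sp (H i)" using D2[OF iI hi] by simp
              have c: "1 / (1 - sp) < lam"
                using Fle FF_gt_c[OF hi sp(2) vLH] by linarith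
              note f2 = fin2[OF c]
              have hh: "H i \<le> h2"
              proof (rule ccontr)
                assume "\<not> H i \<le> h2"
                then have "FF vH vL sp h2 < FF vH vL sp (H i)"
                  using f2 hi sp vLH by (intro FF_strict) auto
                then show False using Fle f2 by simp
              qed
              have "FF vH' vL sp' h2 < FF vH' vL sp' h2'"
                using f2 h2' sp' vLH' by (intro FF_strict) auto
              then have "FF vH' vL sp' h2 < FF vH vL sp h2" using f2 h2' by simp
              then have g2: "(vH' - h2) * (1 - sp) < (vH - h2) * (1 - sp')"
                using FF_less_iff[of h2 vL sp sp' vH' vH] f2 sp sp' by simp
              have "0 \<le> (h2 - H i) * (sp - sp')" using hh spgt by simp
              then have "(vH' - H i) * (1 - sp) < (vH - H i) * (1 - sp')"
                using g2 by (simp add: algebra_simps)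
              then have "FF vH' vL sp' (H i) < FF vH vL sp (H i)"
                using FF_less_iff[of "H i" vL sp sp' vH' vH] hi sp sp' by simp
              then show ?thesis
                using incl[OF finI s0 sp(2) sp'(2) _ iI hi vLH' _ i] less.IH by auto
            qed
          qed
        qed
      qed
    qed
    then show ?thesis by simp
  qed
  have part2: "(\<forall>t\<ge>2. ?D' t \<subseteq> ?D t) \<or> (\<exists>tt\<ge>2. (\<forall>t. 2 \<le> t \<and> t \<le> tt \<longrightarrow> ?D' t \<subseteq> ?D t)
                    \<and> (\<forall>t>tt. ?D t \<subseteq> ?D' t))" if splt: "sp < sp'"
  proof (cases "\<forall>t\<ge>2. ?D' t \<subseteq> ?D t")
    case True then show ?thesis by blast
  next
    case False
    have vHgt: "vH' < vH"
    proof (rule ccontr)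
      assume "\<not> vH' < vH"
      then have "0 \<le> (vH' - vH) * (sp' - sp)" using splt by simp
      then show False using opp by simp
    qed
    have c: "1 / (1 - sp) < lam"
    proof -
      have "1 / (1 - sp) < 1 / (1 - sp')" using splt sp' by (simp add: frac_less2)
      then show ?thesis using lam' by simp
    qed
    note f2 = fin2[OF c]
    have "FF vH' vL sp' h2 < FF vH' vL sp' h2'"
      using f2 h2' sp' vLH' by (intro FF_strict) auto
    then have "FF vH' vL sp' h2 < FF vH vL sp h2" using f2 h2' by simp
    then have g2: "(vH' - h2) * (1 - sp) < (vH - h2) * (1 - sp')"
      using FF_less_iff[of h2 vL sp sp' vH' vH] f2 sp sp' by simp
    have "0 < (vL - h2) * (sp' - sp)" using f2 splt by simp
    then have K: "(vH' - vL) * (2 - sp) \<le> (vH - vL) * (2 - sp')"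
      using g2 vHgt by (simp add: algebra_simps)
    define Pt where "Pt t = (2 \<le> t \<and> \<not> ?D' t \<subseteq> ?D t)" for t
    have exP: "\<exists>t. Pt t" using False unfolding Pt_def by blast
    define T0 where "T0 = (LEAST t. Pt t)"
    have PT0: "Pt T0" unfolding T0_def using exP by (rule LeastI_ex)
    have prevT0: "?D' t \<subseteq> ?D t" if "t < T0" for t
    proof (cases "t \<le> 1")
      case True then show ?thesis using P01 by blast
    next
      case False
      then have "\<not> Pt t" using not_less_Least[of t Pt] that unfolding T0_def by blast
      then show ?thesis using False unfolding Pt_def by simp
    qed
    have T03: "3 \<le> T0" using PT0 P2 unfolding Pt_def
      by (metis eval_nat_numeral(3) le_antisym not_less_eq_eq)
    obtain i0 where i0': "i0 \<in> ?D' T0" and i0n: "i0 \<notin> ?D T0" using PT0 unfolding Pt_def by blast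
    have i0I: "i0 \<in> I" using i0' Dn_sub[of I s sp' H vL "\<lambda>_. vH'" T0] by blast
    have hi0: "H i0 < vL"
    proof (rule ccontr)
      assume "\<not> H i0 < vL"
      then have gt: "vL < H i0" using Hc i0I by force
      have "i0 \<in> ?D (Suc (T0 - 1))"
        using Hc i0I by (intro group1[where H=H and i=i0 and vH=vH and t="T0 - 1", OF finI s0 sp(2) i0I gt]) auto
      then show False using i0n T03 by simp
    qed
    have i0D: "i0 \<notin> ?D t" if "t \<le> T0" for t
      using mono_le[OF finI s0 sp(2) vLH Hc that] i0n by blast
    have i0D': "i0 \<notin> ?D' t" if "t < T0" for t
      using prevT0[OF that] i0D[of t] that by auto
    let ?P = "sig I s sp H vL (\<lambda>_. vH) i0 T0" and ?P' = "sig I s sp' H vL (\<lambda>_. vH') i0 T0"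
    let ?W = "wsum s i0 I"
    let ?a = "FF vH vL sp (H i0) + 1" and ?a' = "FF vH' vL sp' (H i0) + 1"
    have T0S: "T0 = Suc (T0 - 1)" using T03 by simp
    have hA: "real T0 * ?W < ?a' * ?P'"
      using i0' low_iff[where H=H and s=s and vH=vH' and t="T0 - 1", OF finI sp'(2) i0I hi0] T0S by simp
    have hB: "?a * ?P \<le> real T0 * ?W"
      using i0n low_iff[where H=H and s=s and vH=vH and t="T0 - 1", OF finI sp(2) i0I hi0] T0S by simp
    have hPP: "?P' \<le> ?P" unfolding sig_def
    proof (intro sum_mono)
      fix t' assume "t' \<in> {..<T0}"
      then show "wsum s i0 (?D' t') \<le> wsum s i0 (?D t')"
        using prevT0 by (intro wsum_mono[OF finite_subset[OF Dn_sub finI] _ s0]) auto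
    qed
    have late: "T0 \<le> T \<longrightarrow> ?D T \<subseteq> ?D' T" for T
    proof (induction T rule: less_induct)
      case (less T)
      show ?case
      proof (intro impI subsetI)
        fix j assume TT: "T0 \<le> T" and j: "j \<in> ?D T"
        then have jI: "j \<in> I" using Dn_sub[of I s sp H vL "\<lambda>_. vH" T] by blast
        have TS: "T = Suc (T - 1)" using TT T03 by simp
        show "j \<in> ?D' T"
        proof (cases "vL < H j")
          case True
          have "j \<in> ?D' (Suc (T - 1))"
            using Hc' jI by (intro group1[where H=H and i=j and vH=vH' and t="T - 1", OF finI s0 sp'(2) jI True]) auto
          then show ?thesis using TS by simp
        next
          case nl: False
          then have hj: "H j < vL" using Glow jI by blast
          show ?thesis
          proof (cases "j \<in> ?D' T0")
            case True
            then show ?thesis using mono_le[OF finI s0 sp'(2) vLH' Hc' TT] by blast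
          next
            case jn: False
            have hji: "H j < H i0"
            proof (rule ccontr)
              assume "\<not> H j < H i0"
              then have "H i0 \<le> H j" by simp
              then have "j \<in> ?D' T0" using upper[OF finI s0 s(2) sp'(2) vLH' Hc', of T0] i0' jI by blast
              then show False using jn by simp
            qed
            have jD: "j \<notin> ?D t" if "t < T0" for t
            proof
              assume "j \<in> ?D t"
              then have "i0 \<in> ?D t" using upper[OF finI s0 s(2) sp(2) vLH Hc, of t] i0I hji by auto
              then show False using i0D[of t] that by simp
            qed
            have jD': "j \<notin> ?D' t" if "t < T0" for t
              using mono_le[OF finI s0 sp'(2) vLH' Hc', of t T0] that jn by auto
            have sP: "sig I s sp H vL (\<lambda>_. vH) j T0 = ?P" unfolding sig_def
            proof (intro sum.cong refl)
              fix t assume "t \<in> {..<T0}"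
              then have "t < T0" by simp
              then show "wsum s j (?D t) = wsum s i0 (?D t)"
                using jD i0D[of t] finite_subset[OF Dn_sub finI]
                by (simp add: wsum_notin)
            qed
            have sP': "sig I s sp' H vL (\<lambda>_. vH') j T0 = ?P'" unfolding sig_def
            proof (intro sum.cong refl)
              fix t assume "t \<in> {..<T0}"
              then have "t < T0" by simp
              then show "wsum s j (?D' t) = wsum s i0 (?D' t)"
                using jD' i0D'[of t] finite_subset[OF Dn_sub finI]
                by (simp add: wsum_notin)
            qed
            let ?Q = "\<Sum>t\<in>{T0..<T}. wsum s j (?D t)" and ?Q' = "\<Sum>t\<in>{T0..<T}. wsum s j (?D' t)"
            have QQ: "?Q \<le> ?Q'"
            proof (intro sum_mono)
              fix t assume "t \<in> {T0..<T}"
              then have "?D t \<subseteq> ?D' t" using less.IH[of t] by simp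
              then show "wsum s j (?D t) \<le> wsum s j (?D' t)"
                by (intro wsum_mono[OF finite_subset[OF Dn_sub finI] _ s0])
            qed
            have Q0: "0 \<le> ?Q" by (intro sum_nonneg wsum_nonneg[OF s0])
            have WW: "wsum s j I = ?W" using finI jI i0I by (simp add: wsum_in)
            have hjD: "real T * ?W < (FF vH vL sp (H j) + 1) * (?P + ?Q)"
              using j low_iff[where H=H and s=s and vH=vH and t="T - 1", OF finI sp(2) jI hj] TS
                sig_split[OF TT, of I s sp H vL "\<lambda>_. vH" j] sP WW by simp
            have r: "(FF vH vL sp (H j) + 1) * ?a' \<le> (FF vH' vL sp' (H j) + 1) * ?a"
              by (rule ratio[OF less_imp_le[OF hji] hi0 sp(2) sp'(2) K])
            have goal: "real T * ?W < (FF vH' vL sp' (H j) + 1) * (?P' + ?Q')"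
              by (rule final_alg[OF _ _ hA hB hPP sig_nonneg[OF s0] r hjD QQ Q0])
                (use FF_pos[OF hi0 sp(2) vLH] FF_pos[OF hj sp(2) vLH] in auto)
            show ?thesis
              using goal low_iff[where H=H and s=s and vH=vH' and t="T - 1", OF finI sp'(2) jI hj] TS
                sig_split[OF TT, of I s sp' H vL "\<lambda>_. vH'" j] sP' WW by simp
          qed
        qed
      qed
    qed
    show ?thesis
    proof (rule disjI2, rule exI[of _ "T0 - 1"], intro conjI allI impI)
      show "2 \<le> T0 - 1" using T03 by simp
    next
      fix t assume "2 \<le> t \<and> t \<le> T0 - 1"
      then have "t < T0" using T03 by linarith
      then show "?D' t \<subseteq> ?D t" by (rule prevT0)
    next
      fix t assume "T0 - 1 < t"
      then show "?D t \<subseteq> ?D' t" using late[of t] by simp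
    qed
  qed
  show ?thesis using part1 part2 by auto
qed


end
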